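(* Let $f,g:\mathbb{R}^n\to[0,+\infty)$ and $h_1,h_2:\mathbb{R}^n\to\mathbb{R}$, let $C\subseteq\mathbb{R}^n$ be closed and convex, $\Omega:=\{x:g(x)\neq0\}$, $C\cap\Omega\neq\emptyset$, and assume: $f$ is convex; $g$ is differentiable with locally Lipschitz gradient; $h_1$ is differentiable with locally Lipschitz gradient; $h_2$ is convex. Let $F$, $H$ and Algorithm 1 be as in the context, with $x^0\in\mathrm{dom}F$, and assume $\mathcal{X}_0:=\{x\in\mathrm{dom}F:F(x)\le F(x^0)\}$ is compact. Then every accumulation point of the sequence $\{x^k:k\in\mathbb{N}\}$ generated by Algorithm 1 belongs to $\mathcal{X}_0$ and is a critical point of $F$.
   Context: $F(x)=f^2(x)/g(x)+h_1(x)-h_2(x)$ if $x\in\Omega\cap C$, $F(x)=+\infty$ otherwise. $\iota_C$ is the indicator of $C$, $h_2^\star$ the convex conjugate of $h_2$, $\partial$ the limiting subdifferential (the usual one for convex functions), $\mathrm{prox}_\varphi(y)=\arg\min_x\{\varphi(x)+\frac12\|x-y\|_2^2\}$. $H(x,z,c)=2cf(x)+\iota_C(x)-c^2g(x)+h_1(x)+h_2^\star(z)-\langle x,z\rangle$. A point $x^\star\in\Omega\cap C$ is a critical point of $F$ if, with $c_\star=f(x^\star)/g(x^\star)$, $0\in\partial(2c_\star f+\iota_C)(x^\star)-c_\star^2\nabla g(x^\star)+\nabla h_1(x^\star)-\partial h_2(x^\star)$. Algorithm 1: given $x^0\in\mathrm{dom}F$, $0<\underline{\alpha}<\overline{\alpha}$,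 $\sigma>0$, $0<r<1$, for $k=0,1,2,\dots$: (Step 1) compute $c_k=f(x^k)/g(x^k)$, choose $z^k\in\partial h_2(x^k)$, set $\alpha:=\widetilde{\alpha}_k\in[\underline{\alpha},\overline{\alpha}]$; (Step 2) compute $\widehat{x}^k\in\mathrm{prox}_{2\alpha c_kf+\iota_C}\big(x^k-\alpha(\nabla h_1(x^k)-c_k^2\nabla g(x^k)-z^k)\big)$; if $\widehat{x}^k\in\Omega$ and $H(\widehat{x}^k,z^k,f(\widehat{x}^k)/g(\widehat{x}^k))+\frac{\sigma}{2}\|\widehat{x}^k-x^k\|_2^2\le F(x^k)$, set $x^{k+1}=\widehat{x}^k$, $\alpha_k:=\alpha$ and go to the next $k$; otherwise set $\alpha:=r\alpha$ and repeat Step 2. *)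

theory Defs
  imports "HOL-Analysis.Analysis"
begin

definition ind :: "'a set \<Rightarrow> 'a \<Rightarrow> ereal" where
  "ind C x = (if x \<in> C then 0 else \<infinity>)"

text \<open>Convex subdifferential of an extended-real-valued function (the limiting
  subdifferential coincides with it for proper convex functions).\<close>
definition subdiff :: "('a::real_inner \<Rightarrow> ereal) \<Rightarrow> 'a \<Rightarrow> 'a set" where
  "subdiff \<phi> x = {v. \<bar>\<phi> x\<bar> \<noteq> \<infinity> \<and> (\<forall>y. \<phi> x + ereal (inner v (y - x)) \<le> \<phi> y)}"

definition conj :: "('a::real_inner \<Rightarrow> real) \<Rightarrow> 'a \<Rightarrow> ereal" where
  "conj h z = (SUP y. ereal (inner y z - h y))"

definition prox :: "('a::real_normed_vector \<Rightarrow> ereal) \<Rightarrow> 'a \<Rightarrow> 'a set" where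
  "prox \<phi> y = {x. \<forall>x'. \<phi> x + ereal (norm (x - y)^2 / 2) \<le> \<phi> x' + ereal (norm (x' - y)^2 / 2)}"

definition Omega :: "('a \<Rightarrow> real) \<Rightarrow> 'a set" where
  "Omega g = {x. g x \<noteq> 0}"

definition Fobj :: "('a \<Rightarrow> real) \<Rightarrow> ('a \<Rightarrow> real) \<Rightarrow> ('a \<Rightarrow> real) \<Rightarrow> ('a \<Rightarrow> real)
    \<Rightarrow> 'a set \<Rightarrow> 'a \<Rightarrow> ereal" where
  "Fobj f g h1 h2 C x =
     (if x \<in> Omega g \<inter> C then ereal ((f x)^2 / g x + h1 x - h2 x) else \<infinity>)"

definition domF :: "('a \<Rightarrow> real) \<Rightarrow> ('a \<Rightarrow> real) \<Rightarrow> ('a \<Rightarrow> real) \<Rightarrow> ('a \<Rightarrow> real)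
    \<Rightarrow> 'a set \<Rightarrow> 'a set" where
  "domF f g h1 h2 C = {x. Fobj f g h1 h2 C x < \<infinity>}"

definition Hfun :: "('a::real_inner \<Rightarrow> real) \<Rightarrow> ('a \<Rightarrow> real) \<Rightarrow> ('a \<Rightarrow> real) \<Rightarrow> ('a \<Rightarrow> real)
    \<Rightarrow> 'a set \<Rightarrow> 'a \<Rightarrow> 'a \<Rightarrow> real \<Rightarrow> ereal" where
  "Hfun f g h1 h2 C x z c =
     ereal (2 * c * f x) + ind C x + ereal (h1 x - c^2 * g x) + conj h2 z
       + ereal (- inner x z)"

definition critical_point :: "('a::real_inner \<Rightarrow> real) \<Rightarrow> ('a \<Rightarrow> real) \<Rightarrow> ('a \<Rightarrow> 'a)
    \<Rightarrow> ('a \<Rightarrow> 'a) \<Rightarrow> ('a \<Rightarrow> real) \<Rightarrow> 'a set \<Rightarrow> 'a \<Rightarrow> bool" where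
  "critical_point f g Dg Dh1 h2 C xs \<longleftrightarrow>
     xs \<in> Omega g \<inter> C \<and>
     (let c = f xs / g xs in
       \<exists>u \<in> subdiff (\<lambda>y. ereal (2 * c * f y) + ind C y) xs.
       \<exists>w \<in> subdiff (\<lambda>y. ereal (h2 y)) xs.
         u - c^2 *\<^sub>R Dg xs + Dh1 xs - w = 0)"

definition locally_lipschitz :: "('a::metric_space \<Rightarrow> 'b::metric_space) \<Rightarrow> bool" where
  "locally_lipschitz G \<longleftrightarrow>
     (\<forall>x. \<exists>e>0. \<exists>L. \<forall>y\<in>ball x e. \<forall>y'\<in>ball x e. dist (G y) (G y') \<le> L * dist y y')"

text \<open>For each k: c k, z k, the initial step a0 k \<in> [alo,ahi],
  the number j k of backtracking reductions, trial points xh k i for i \<le> j k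
  (each a chosen element of the prox), all rejected trials for i < j k and the
  accepted trial at i = j k, with x (k+1) = xh k (j k).\<close>
definition generated_by_alg1 ::
  "('a::euclidean_space \<Rightarrow> real) \<Rightarrow> ('a \<Rightarrow> real) \<Rightarrow> ('a \<Rightarrow> 'a) \<Rightarrow> ('a \<Rightarrow> real) \<Rightarrow> ('a \<Rightarrow> 'a)
    \<Rightarrow> ('a \<Rightarrow> real) \<Rightarrow> 'a set \<Rightarrow> real \<Rightarrow> real \<Rightarrow> real \<Rightarrow> real \<Rightarrow> (nat \<Rightarrow> 'a) \<Rightarrow> bool" where
  "generated_by_alg1 f g Dg h1 Dh1 h2 C alo ahi sig r x \<longleftrightarrow>
     x 0 \<in> domF f g h1 h2 C \<and>
     (\<exists>(z :: nat \<Rightarrow> 'a) (a0 :: nat \<Rightarrow> real) (j :: nat \<Rightarrow> nat) (xh :: nat \<Rightarrow> nat \<Rightarrow> 'a).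
       \<forall>k. let c = f (x k) / g (x k) in
         z k \<in> subdiff (\<lambda>y. ereal (h2 y)) (x k) \<and>
         alo \<le> a0 k \<and> a0 k \<le> ahi \<and>
         (\<forall>i \<le> j k. let a = r ^ i * a0 k in
            xh k i \<in> prox (\<lambda>y. ereal (2 * a * c * f y) + ind C y)
                       (x k - a *\<^sub>R (Dh1 (x k) - c^2 *\<^sub>R Dg (x k) - z k))) \<and>
         (\<forall>i \<le> j k.
            (xh k i \<in> Omega g \<and>
             Hfun f g h1 h2 C (xh k i) (z k) (f (xh k i) / g (xh k i))
               + ereal (sig / 2 * norm (xh k i - x k)^2) \<le> Fobj f g h1 h2 C (x k))
            \<longleftrightarrow> i = j k) \<and>
         x (Suc k) = xh k (j k))"

end

theory Submission
  imports Defs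
begin

lemma descent_bound:
  fixes \<phi> :: "'a::euclidean_space \<Rightarrow> real" and D :: "'a \<Rightarrow> 'a"
  assumes der: "\<And>y. (\<phi> has_derivative (\<lambda>v. inner (D y) v)) (at y)"
    and lip: "\<forall>y\<in>cball x d. norm (D y - D x) \<le> L * d"
    and p: "p \<in> cball x d"
  shows "\<bar>\<phi> p - \<phi> x - inner (D x) (p - x)\<bar> \<le> L * d * norm (p - x)"
proof -
  define \<psi> where "\<psi> y = \<phi> y - inner (D x) y" for y
  have d\<psi>: "(\<psi> has_derivative (\<lambda>v. inner (D y) v - inner (D x) v)) (at y within cball x d)" for y
    unfolding \<psi>_def
    by (rule has_derivative_diff[OF has_derivative_at_withinI[OF der]
          bounded_linear_imp_has_derivative[OF bounded_linear_inner_right]])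
  have on: "onorm (\<lambda>v. inner (D y) v - inner (D x) v) \<le> L * d" if "y \<in> cball x d" for y
  proof (rule onorm_le)
    fix v
    have "norm (inner (D y) v - inner (D x) v) = \<bar>inner (D y - D x) v\<bar>"
      by (simp add: inner_diff_left)
    also have "\<dots> \<le> norm (D y - D x) * norm v" by (rule Cauchy_Schwarz_ineq2)
    also have "\<dots> \<le> L * d * norm v" using lip that by (intro mult_right_mono) auto
    finally show "norm (inner (D y) v - inner (D x) v) \<le> L * d * norm v" .
  qed
  have "norm (\<psi> p - \<psi> x) \<le> L * d * norm (p - x)"
    by (rule differentiable_bound[OF convex_cball d\<psi> on p]) (use p in \<open>auto intro: order_trans[OF zero_le_dist]\<close>)
  moreover have "\<psi> p - \<psi> x = \<phi> p - \<phi> x - inner (D x) (p - x)"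
    unfolding \<psi>_def by (simp add: inner_diff_right)
  ultimately show ?thesis by simp
qed

lemma convex_local_lipschitz:
  fixes f :: "'a::euclidean_space \<Rightarrow> real"
  assumes cvx: "convex_on UNIV f"
  shows "\<exists>e>0. \<exists>L. \<forall>y\<in>ball x e. \<forall>y'\<in>ball x e. \<bar>f y - f y'\<bar> \<le> L * dist y y'"
proof -
  have "continuous_on UNIV f" by (rule convex_on_continuous[OF open_UNIV cvx])
  then have "isCont f x" by (simp add: continuous_on_eq_continuous_at)
  then obtain e0 where e0: "e0 > 0" "\<And>y. dist y x < e0 \<Longrightarrow> dist (f y) (f x) < 1"
    unfolding continuous_at_eps_delta by (metis zero_less_one)
  define M where "M = \<bar>f x\<bar> + 1"
  have bnd: "\<bar>f y\<bar> \<le> M" if "dist y x < e0" for y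
    using e0(2)[OF that] unfolding M_def dist_real_def by linarith
  define e where "e = e0 / 2"
  define e' where "e' = e0 / 4"
  define L where "L = 2 * M / e'"
  have e'pos: "e' > 0" using e0 by (simp add: e'_def)
  have one: "f y' - f y \<le> L * dist y y'" if y: "y \<in> ball x e" and y': "y' \<in> ball x e" for y y'
  proof (cases "y = y'")
    case True then show ?thesis by simp
  next
    case False
    define \<delta> where "\<delta> = norm (y' - y)"
    have \<delta>pos: "\<delta> > 0" using False by (simp add: \<delta>_def)
    define u where "u = y' + (e' / \<delta>) *\<^sub>R (y' - y)"
    define l where "l = \<delta> / (\<delta> + e')"
    have l01: "0 \<le> l" "l \<le> 1" using \<delta>pos e'pos by (auto simp: l_def)
    have "norm (u - x) \<le> norm (y' - x) + norm ((e' / \<delta>) *\<^sub>R (y' - y))"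
      unfolding u_def by (metis add_diff_eq diff_add_eq norm_triangle_ineq add.commute)
    also have "norm ((e' / \<delta>) *\<^sub>R (y' - y)) = e'"
      using \<delta>pos e'pos by (simp add: \<delta>_def)
    finally have "norm (u - x) < e0"
      using y' e0(1) by (simp add: dist_norm e_def e'_def norm_minus_commute)
    then have fu: "\<bar>f u\<bar> \<le> M" using bnd by (simp add: dist_norm)
    have "dist y x < e0" using y e0(1) by (simp add: dist_commute e_def)
    then have fy: "\<bar>f y\<bar> \<le> M" by (rule bnd)
    have comb: "(1 - l) *\<^sub>R y + l *\<^sub>R u = y'"
    proof -
      have "(1 - l) *\<^sub>R y + l *\<^sub>R u = y + (l * (1 + e' / \<delta>)) *\<^sub>R (y' - y)"
        unfolding u_def by (simp add: algebra_simps)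
      also have "l * (1 + e' / \<delta>) = 1"
      proof -
        have "\<delta> + e' > 0" using \<delta>pos e'pos by simp
        have "1 + e' / \<delta> = (\<delta> + e') / \<delta>" using \<delta>pos by (simp add: field_simps)
        then show ?thesis using \<delta>pos \<open>\<delta> + e' > 0\<close> by (simp add: l_def)
      qed
      finally show ?thesis by simp
    qed
    have "f y' \<le> (1 - l) * f y + l * f u"
      using convex_onD[OF cvx l01, of y u] comb by simp
    then have "f y' - f y \<le> l * (f u - f y)" by (simp add: algebra_simps)
    also have "\<dots> \<le> l * (2 * M)" using fu fy l01 by (intro mult_left_mono) auto
    also have "\<dots> \<le> (\<delta> / e') * (2 * M)"
    proof (rule mult_right_mono)
      show "l \<le> \<delta> / e'" using \<delta>pos e'pos by (simp add: l_def field_simps)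
      show "0 \<le> 2 * M" unfolding M_def by simp
    qed
    also have "\<dots> = L * dist y y'" by (simp add: L_def \<delta>_def dist_norm norm_minus_commute)
    finally show ?thesis .
  qed
  show ?thesis
  proof (intro exI conjI ballI)
    show "e > 0" using e0 by (simp add: e_def)
    fix y y' assume "y \<in> ball x e" "y' \<in> ball x e"
    then show "\<bar>f y - f y'\<bar> \<le> L * dist y y'"
      using one[of y y'] one[of y' y] by (simp add: dist_commute)
  qed
qed

lemma unif_local:
  fixes K :: "'a::metric_space set" and R :: "real \<Rightarrow> 'a \<Rightarrow> 'a \<Rightarrow> bool"
  assumes "compact K"
    and loc: "\<And>x. x \<in> K \<Longrightarrow> \<exists>e>0. \<exists>B. \<forall>y\<in>ball x e. \<forall>y'\<in>ball x e. R B y y'"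
    and mono: "\<And>B B' y y'. B \<le> B' \<Longrightarrow> R B y y' \<Longrightarrow> R B' y y'"
  shows "\<exists>e>0. \<exists>B. \<forall>x\<in>K. \<forall>y\<in>ball x e. \<forall>y'\<in>ball x e. R B y y'"
proof -
  obtain E Bf where EB: "\<And>x. x\<in>K \<Longrightarrow> E x > 0 \<and> (\<forall>y\<in>ball x (E x). \<forall>y'\<in>ball x (E x). R (Bf x) y y')"
    using loc by metis
  obtain K' where K': "K' \<subseteq> K" "finite K'" "K \<subseteq> (\<Union>c\<in>K'. ball c (E c / 2))"
    by (rule compactE_image[OF assms(1), of K "\<lambda>c. ball c (E c / 2)"]) (use EB in auto)
  show ?thesis
  proof (cases "K' = {}")
    case True
    then have "K = {}" using K' by auto
    then show ?thesis by (intro exI[of _ 1]) simp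
  next
    case False
    define e where "e = Min ((\<lambda>c. E c / 2) ` K')"
    define B where "B = Max (Bf ` K')"
    have epos: "e > 0" using False K' EB by (auto simp: e_def)
    show ?thesis
    proof (intro exI conjI ballI)
      show "e > 0" by (fact epos)
      fix x y y' assume x: "x \<in> K" and y: "y \<in> ball x e" and y': "y' \<in> ball x e"
      obtain c where c: "c \<in> K'" "x \<in> ball c (E c / 2)" using K' x by auto
      have ec: "e \<le> E c / 2" unfolding e_def using c K' by (intro Min_le) auto
      have "dist c y \<le> dist c x + dist x y" by (rule dist_triangle)
      then have "y \<in> ball c (E c)" using c y ec by auto
      have "dist c y' \<le> dist c x + dist x y'" by (rule dist_triangle)
      then have "y' \<in> ball c (E c)" using c y' ec by auto
      then have "R (Bf c) y y'" using EB c K' \<open>y \<in> ball c (E c)\<close> by auto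
      moreover have "Bf c \<le> B" using c K' by (auto simp: B_def)
      ultimately show "R B y y'" using mono by blast
    qed
  qed
qed

lemma loclip_isCont:
  assumes "locally_lipschitz G"
  shows "isCont G x"
proof -
  obtain e L where e: "e > 0" and L: "\<forall>y\<in>ball x e. \<forall>y'\<in>ball x e. dist (G y) (G y') \<le> L * dist y y'"
    using assms unfolding locally_lipschitz_def by blast
  show ?thesis unfolding continuous_at_eps_delta
  proof (intro allI impI)
    fix \<epsilon> :: real assume "\<epsilon> > 0"
    show "\<exists>d>0. \<forall>x'. dist x' x < d \<longrightarrow> dist (G x') (G x) < \<epsilon>"
    proof (intro exI conjI allI impI)
      show "min e (\<epsilon> / (\<bar>L\<bar> + 1)) > 0" using e \<open>\<epsilon> > 0\<close> by simp
      fix y assume y: "dist y x < min e (\<epsilon> / (\<bar>L\<bar> + 1))"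
      then have "y \<in> ball x e" by (simp add: dist_commute)
      then have "dist (G y) (G x) \<le> L * dist y x" using L e by auto
      also have "\<dots> \<le> \<bar>L\<bar> * dist y x" by (simp add: mult_right_mono)
      also have "\<dots> \<le> \<bar>L\<bar> * (\<epsilon> / (\<bar>L\<bar> + 1))" using y by (intro mult_left_mono) auto
      also have "\<dots> < \<epsilon>" using \<open>\<epsilon> > 0\<close> by (simp add: field_simps)
      finally show "dist (G y) (G x) < \<epsilon>" .
    qed
  qed
qed

lemma cont_ev:
  fixes \<phi> :: "'a::metric_space \<Rightarrow> 'b::metric_space"
  assumes "isCont \<phi> x" "\<epsilon> > 0"
  shows "eventually (\<lambda>y. dist (\<phi> y) (\<phi> x) < \<epsilon>) (nhds x)"
  using assms unfolding continuous_at_eps_delta eventually_nhds_metric by blast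

definition Rloc where
  "Rloc f g h1 h2 Dg Dh1 B y y' \<longleftrightarrow>
     norm (Dg y - Dg y') \<le> B * dist y y' \<and> norm (Dh1 y - Dh1 y') \<le> B * dist y y' \<and>
     \<bar>f y - f y'\<bar> \<le> B * dist y y' \<and> 1 \<le> B * g y \<and> \<bar>f y\<bar> \<le> B \<and> \<bar>g y\<bar> \<le> B \<and>
     \<bar>h1 y\<bar> \<le> B \<and> \<bar>h2 y\<bar> \<le> B \<and> norm (Dg y) \<le> B \<and> norm (Dh1 y) \<le> B"

lemma Rloc_mono:
  assumes "\<And>y. g y \<ge> 0" "B \<le> B'" "Rloc f g h1 h2 Dg Dh1 B y y'"
  shows "Rloc f g h1 h2 Dg Dh1 B' y y'"
proof -
  have "B * dist y y' \<le> B' * dist y y'" using assms(2) by (simp add: mult_right_mono)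
  moreover have "B * g y \<le> B' * g y" using assms(1,2) by (simp add: mult_right_mono)
  ultimately show ?thesis using assms(2,3) unfolding Rloc_def by linarith
qed

lemma Rloc_local:
  fixes f g h1 h2 :: "'a::euclidean_space \<Rightarrow> real" and Dg Dh1 :: "'a \<Rightarrow> 'a"
  assumes g_nonneg: "\<And>y. g y \<ge> 0" and gx: "g x > 0"
    and f_convex: "convex_on UNIV f"
    and g_grad: "\<And>y. (g has_derivative (\<lambda>v. inner (Dg y) v)) (at y)"
    and g_lip: "locally_lipschitz Dg"
    and h1_grad: "\<And>y. (h1 has_derivative (\<lambda>v. inner (Dh1 y) v)) (at y)"
    and h1_lip: "locally_lipschitz Dh1"
    and h2_convex: "convex_on UNIV h2"
  shows "\<exists>e>0. \<exists>B. \<forall>y\<in>ball x e. \<forall>y'\<in>ball x e. Rloc f g h1 h2 Dg Dh1 B y y'"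
proof -
  have cf: "isCont f x" using convex_on_continuous[OF open_UNIV f_convex]
    by (simp add: continuous_on_eq_continuous_at)
  have ch2: "isCont h2 x" using convex_on_continuous[OF open_UNIV h2_convex]
    by (simp add: continuous_on_eq_continuous_at)
  have cg: "isCont g x" using has_derivative_continuous[OF g_grad] by simp
  have ch1: "isCont h1 x" using has_derivative_continuous[OF h1_grad] by simp
  have cDg: "isCont Dg x" by (rule loclip_isCont[OF g_lip])
  have cDh1: "isCont Dh1 x" by (rule loclip_isCont[OF h1_lip])
  obtain e1 L1 where e1: "e1 > 0" "\<forall>y\<in>ball x e1. \<forall>y'\<in>ball x e1. dist (Dg y) (Dg y') \<le> L1 * dist y y'"
    using g_lip unfolding locally_lipschitz_def by blast
  obtain e2 L2 where e2: "e2 > 0" "\<forall>y\<in>ball x e2. \<forall>y'\<in>ball x e2. dist (Dh1 y) (Dh1 y') \<le> L2 * dist y y'"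
    using h1_lip unfolding locally_lipschitz_def by blast
  obtain e3 L3 where e3: "e3 > 0" "\<forall>y\<in>ball x e3. \<forall>y'\<in>ball x e3. \<bar>f y - f y'\<bar> \<le> L3 * dist y y'"
    using convex_local_lipschitz[OF f_convex] by blast
  have ev: "eventually (\<lambda>y. dist (f y) (f x) < 1 \<and> dist (g y) (g x) < g x / 2 \<and> dist (h1 y) (h1 x) < 1
      \<and> dist (h2 y) (h2 x) < 1 \<and> dist (Dg y) (Dg x) < 1 \<and> dist (Dh1 y) (Dh1 x) < 1) (nhds x)"
    using cont_ev[OF cf] cont_ev[OF cg, of "g x / 2"] cont_ev[OF ch1] cont_ev[OF ch2] cont_ev[OF cDg] cont_ev[OF cDh1] gx
    by (intro eventually_conj) auto
  then obtain d where d: "d > 0" "\<And>y. dist y x < d \<Longrightarrow> dist (f y) (f x) < 1 \<and> dist (g y) (g x) < g x / 2 \<and> dist (h1 y) (h1 x) < 1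
      \<and> dist (h2 y) (h2 x) < 1 \<and> dist (Dg y) (Dg x) < 1 \<and> dist (Dh1 y) (Dh1 x) < 1"
    unfolding eventually_nhds_metric by blast
  define B where "B = \<bar>L1\<bar> + \<bar>L2\<bar> + \<bar>L3\<bar> + 2 / g x + \<bar>f x\<bar> + 2 * \<bar>g x\<bar> + \<bar>h1 x\<bar> + \<bar>h2 x\<bar>
     + norm (Dg x) + norm (Dh1 x) + 1"
  define e where "e = min d (min e1 (min e2 e3))"
  have gx2: "0 \<le> 2 / g x" using gx by simp
  have BL: "L1 \<le> B" "L2 \<le> B" "L3 \<le> B" "2 / g x \<le> B" unfolding B_def
    using gx2 abs_ge_self[of L1] abs_ge_self[of L2] abs_ge_self[of L3] abs_ge_zero[of L1] abs_ge_zero[of L2]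
      abs_ge_zero[of L3] abs_ge_zero[of "f x"] abs_ge_zero[of "g x"] abs_ge_zero[of "h1 x"]
      abs_ge_zero[of "h2 x"] norm_ge_zero[of "Dg x"] norm_ge_zero[of "Dh1 x"] by linarith+
  note B2 = BL(4)
  show ?thesis
  proof (intro exI conjI ballI)
    show "e > 0" using d e1 e2 e3 by (simp add: e_def)
    fix y y' assume y: "y \<in> ball x e" and y': "y' \<in> ball x e"
    have yb: "y \<in> ball x e1" "y \<in> ball x e2" "y \<in> ball x e3" "y' \<in> ball x e1" "y' \<in> ball x e2" "y' \<in> ball x e3"
      using y y' by (auto simp: e_def)
    have "dist y x < d" using y by (simp add: e_def dist_commute)
    note dy = d(2)[OF this]
    have l1: "norm (Dg y - Dg y') \<le> B * dist y y'"
    proof -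
      have "norm (Dg y - Dg y') \<le> L1 * dist y y'" using e1(2) yb by (simp add: dist_norm)
      also have "\<dots> \<le> B * dist y y'" using BL by (intro mult_right_mono) auto
      finally show ?thesis .
    qed
    have l2: "norm (Dh1 y - Dh1 y') \<le> B * dist y y'"
    proof -
      have "norm (Dh1 y - Dh1 y') \<le> L2 * dist y y'" using e2(2) yb by (simp add: dist_norm)
      also have "\<dots> \<le> B * dist y y'" using BL by (intro mult_right_mono) auto
      finally show ?thesis .
    qed
    have l3: "\<bar>f y - f y'\<bar> \<le> B * dist y y'"
    proof -
      have "\<bar>f y - f y'\<bar> \<le> L3 * dist y y'" using e3(2) yb by simp
      also have "\<dots> \<le> B * dist y y'" using BL by (intro mult_right_mono) auto
      finally show ?thesis .
    qed
    have gy: "g y \<ge> g x / 2" using dy unfolding dist_real_def by arith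
    have "1 \<le> (2 / g x) * g y" using gy gx by (simp add: field_simps)
    also have "\<dots> \<le> B * g y" using B2 g_nonneg by (intro mult_right_mono) auto
    finally have l4: "1 \<le> B * g y" .
    have nDg: "norm (Dg y) \<le> norm (Dg x) + 1"
      using dy norm_triangle_ineq2[of "Dg y" "Dg x"] by (simp add: dist_norm)
    have nDh1: "norm (Dh1 y) \<le> norm (Dh1 x) + 1"
      using dy norm_triangle_ineq2[of "Dh1 y" "Dh1 x"] by (simp add: dist_norm)
    have a1: "\<bar>f y\<bar> \<le> \<bar>f x\<bar> + 1" using dy unfolding dist_real_def by arith
    have a2: "\<bar>g y\<bar> \<le> \<bar>g x\<bar> + g x" using dy unfolding dist_real_def by arith
    have a3: "\<bar>h1 y\<bar> \<le> \<bar>h1 x\<bar> + 1" using dy unfolding dist_real_def by arith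
    have a4: "\<bar>h2 y\<bar> \<le> \<bar>h2 x\<bar> + 1" using dy unfolding dist_real_def by arith
    have Bx: "\<bar>f x\<bar> + 1 \<le> B" "\<bar>g x\<bar> + g x \<le> B" "\<bar>h1 x\<bar> + 1 \<le> B" "\<bar>h2 x\<bar> + 1 \<le> B"
      "norm (Dg x) + 1 \<le> B" "norm (Dh1 x) + 1 \<le> B"
      unfolding B_def
      using gx2 abs_ge_zero[of L1] abs_ge_zero[of L2] gx
        abs_ge_zero[of L3] abs_ge_zero[of "f x"] abs_ge_zero[of "g x"] abs_ge_zero[of "h1 x"]
        abs_ge_zero[of "h2 x"] norm_ge_zero[of "Dg x"] norm_ge_zero[of "Dh1 x"] by linarith+
    show "Rloc f g h1 h2 Dg Dh1 B y y'"
      unfolding Rloc_def using l1 l2 l3 l4 nDg nDh1 a1 a2 a3 a4 Bx by linarith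
  qed
qed

definition Fr :: "('a \<Rightarrow> real) \<Rightarrow> ('a \<Rightarrow> real) \<Rightarrow> ('a \<Rightarrow> real) \<Rightarrow> ('a \<Rightarrow> real) \<Rightarrow> 'a \<Rightarrow> real" where
  "Fr f g h1 h2 x = (f x)^2 / g x + h1 x - h2 x"

lemma Fobj_in: "x \<in> Omega g \<inter> C \<Longrightarrow> Fobj f g h1 h2 C x = ereal (Fr f g h1 h2 x)"
  by (simp add: Fobj_def Fr_def)

lemma domF_iff: "x \<in> domF f g h1 h2 C \<longleftrightarrow> x \<in> Omega g \<inter> C"
  by (simp add: domF_def Fobj_def)

lemma subdiff_real: "z \<in> subdiff (\<lambda>y. ereal (h y)) x \<longleftrightarrow> (\<forall>y. h x + inner z (y - x) \<le> h y)"
  by (simp add: subdiff_def)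

lemma conj_at_subgrad:
  assumes "z \<in> subdiff (\<lambda>y. ereal (h y)) x"
  shows "conj h z = ereal (inner x z - h x)"
proof -
  have le: "inner y z - h y \<le> inner x z - h x" for y
  proof -
    have "h x + inner z (y - x) \<le> h y" using assms by (simp add: subdiff_real)
    then show ?thesis by (simp add: inner_diff_right inner_commute)
  qed
  show ?thesis unfolding conj_def
  proof (rule antisym)
    show "(SUP y. ereal (inner y z - h y)) \<le> ereal (inner x z - h x)"
      by (rule SUP_least) (use le in simp)
    show "ereal (inner x z - h x) \<le> (SUP y. ereal (inner y z - h y))"
      by (rule SUP_upper) simp
  qed
qed

lemma prox_real:
  assumes p: "p \<in> prox (\<lambda>y. ereal (k * f y) + ind C y) q" and x0: "x0 \<in> C"
  shows "p \<in> C \<and> (\<forall>y\<in>C. k * f p + norm (p - q)^2 / 2 \<le> k * f y + norm (y - q)^2 / 2)"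
proof -
  have all: "ereal (k * f p) + ind C p + ereal (norm (p - q)^2 / 2) \<le> ereal (k * f y) + ind C y + ereal (norm (y - q)^2 / 2)" for y
    using p unfolding prox_def by blast
  have pC: "p \<in> C"
  proof (rule ccontr)
    assume "p \<notin> C"
    then show False using all[of x0] x0 by (simp add: ind_def)
  qed
  show ?thesis
  proof (intro conjI ballI pC)
    fix y assume "y \<in> C"
    then show "k * f p + norm (p - q)^2 / 2 \<le> k * f y + norm (y - q)^2 / 2"
      using all[of y] pC by (simp add: ind_def)
  qed
qed

lemma Hfun_in:
  assumes "conj h2 z = ereal K0" "p \<in> C"
  shows "Hfun f g h1 h2 C p z cc = ereal (2 * cc * f p + (h1 p - cc^2 * g p) + K0 - inner p z)"
  using assms by (simp add: Hfun_def ind_def)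

lemma Hfun_out:
  assumes "conj h2 z = ereal K0" "p \<notin> C"
  shows "Hfun f g h1 h2 C p z cc = \<infinity>"
  using assms by (simp add: Hfun_def ind_def)

lemma norm_sq_add_scaled:
  fixes u v :: "'a::real_inner"
  shows "norm (u + a *\<^sub>R v)^2 = norm u ^2 + 2 * a * inner u v + a^2 * norm v ^2"
  unfolding power2_norm_eq_inner
  by (simp add: inner_add_left inner_add_right inner_commute power2_eq_square algebra_simps)

lemma z_bound:
  fixes h2 :: "'a::real_inner \<Rightarrow> real" and z x :: "'a"
  assumes zs: "\<forall>y. h2 x + inner z (y - x) \<le> h2 y" and e: "e > 0"
    and hb: "\<forall>y\<in>ball x e. \<bar>h2 y\<bar> \<le> B"
  shows "norm z \<le> 4 * B / e"
proof (cases "z = 0")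
  case True
  have "\<bar>h2 x\<bar> \<le> B" using hb e by simp
  then have "B \<ge> 0" by simp
  then show ?thesis using True e by simp
next
  case False
  define y where "y = x + ((e / 2) / norm z) *\<^sub>R z"
  have "dist x y = e / 2" using False e by (simp add: y_def dist_norm)
  then have yb: "y \<in> ball x e" using e by simp
  have "inner z (y - x) = (e / 2) * norm z"
    using False by (simp add: y_def power2_norm_eq_inner[symmetric] power2_eq_square)
  then have "h2 x + (e / 2) * norm z \<le> h2 y" using zs[rule_format, of y] by simp
  moreover have "\<bar>h2 x\<bar> \<le> B" "\<bar>h2 y\<bar> \<le> B" using hb yb e by auto
  ultimately have "(e / 2) * norm z \<le> 2 * B" by linarith
  then show ?thesis using e by (simp add: field_simps)
qed

definition abar :: "real \<Rightarrow> real \<Rightarrow> real \<Rightarrow> real" where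
  "abar B e sig = min (e^2 / (64 * B^3)) (min (e / (16 * (B + B^5 + 4 * B / e)))
      (1 / (2 * (B + B^5 + 9 * B^7 + sig / 2))))"

lemma abar_pos: "B > 0 \<Longrightarrow> e > 0 \<Longrightarrow> sig > 0 \<Longrightarrow> abar B e sig > 0"
  unfolding abar_def by (simp add: add_pos_pos)

lemma trial_accept:
  fixes f g h1 h2 :: "'a::euclidean_space \<Rightarrow> real" and Dg Dh1 :: "'a \<Rightarrow> 'a"
  assumes R: "\<forall>y\<in>ball x e. \<forall>y'\<in>ball x e. Rloc f g h1 h2 Dg Dh1 B y y'"
    and e: "0 < e" "e \<le> 1" and sig: "sig > 0"
    and f_nonneg: "\<And>y. f y \<ge> 0" and g_nonneg: "\<And>y. g y \<ge> 0"
    and g_grad: "\<And>y. (g has_derivative (\<lambda>v. inner (Dg y) v)) (at y)"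
    and h1_grad: "\<And>y. (h1 has_derivative (\<lambda>v. inner (Dh1 y) v)) (at y)"
    and zs: "\<forall>y. h2 x + inner z (y - x) \<le> h2 y"
    and a: "0 < a" "a \<le> abar B e sig"
    and pC: "p \<in> C" and xC: "x \<in> C"
    and pr: "\<forall>y\<in>C. 2 * a * (f x / g x) * f p + norm (p - (x - a *\<^sub>R (Dh1 x - (f x / g x)^2 *\<^sub>R Dg x - z)))^2 / 2
              \<le> 2 * a * (f x / g x) * f y + norm (y - (x - a *\<^sub>R (Dh1 x - (f x / g x)^2 *\<^sub>R Dg x - z)))^2 / 2"
  shows "g p \<noteq> 0 \<and> 2 * (f p / g p) * f p + (h1 p - (f p / g p)^2 * g p) + (inner x z - h2 x) - inner p z
           + sig / 2 * norm (p - x)^2 \<le> Fr f g h1 h2 x"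
proof -
  define c where "c = f x / g x"
  define v where "v = Dh1 x - c^2 *\<^sub>R Dg x - z"
  define d where "d = norm (p - x)"
  have Rx: "Rloc f g h1 h2 Dg Dh1 B x x" using R e by auto
  then have Bgx: "1 \<le> B * g x" and gxB: "\<bar>g x\<bar> \<le> B" and fxB: "\<bar>f x\<bar> \<le> B"
    and nDgx: "norm (Dg x) \<le> B" and nDh1x: "norm (Dh1 x) \<le> B"
    unfolding Rloc_def by auto
  have gx0: "g x > 0" using Bgx g_nonneg[of x] by (cases "g x = 0") auto
  have Bpos: "B > 0"
  proof (rule ccontr)
    assume "\<not> B > 0"
    then have "B * g x \<le> 0" using gx0 by (simp add: mult_nonpos_nonneg)
    then show False using Bgx by simp
  qed
  have igx: "1 / g x \<le> B" using Bgx gx0 by (simp add: field_simps)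
  have c0: "c \<ge> 0" using f_nonneg[of x] gx0 by (simp add: c_def)
  have cB: "c \<le> B^2"
  proof -
    have "c = f x * (1 / g x)" by (simp add: c_def)
    also have "\<dots> \<le> B * B" using fxB igx f_nonneg[of x] gx0 by (intro mult_mono) auto
    finally show ?thesis by (simp add: power2_eq_square)
  qed
  have c2B: "c^2 \<le> B^4"
  proof -
    have "c^2 \<le> (B^2)^2" using cB c0 by (intro power_mono) auto
    then show ?thesis by simp
  qed
  have hb: "\<forall>y\<in>ball x e. \<bar>h2 y\<bar> \<le> B" using R e unfolding Rloc_def by auto
  have nz: "norm z \<le> 4 * B / e" by (rule z_bound[OF zs e(1) hb])
  define V where "V = B + B^5 + 4 * B / e"
  have Vpos: "V > 0" using Bpos e by (simp add: V_def add_pos_pos)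
  have nv: "norm v \<le> V"
  proof -
    have "norm v \<le> norm (Dh1 x - c^2 *\<^sub>R Dg x) + norm z" unfolding v_def by (rule norm_triangle_ineq4)
    also have "norm (Dh1 x - c^2 *\<^sub>R Dg x) \<le> norm (Dh1 x) + norm (c^2 *\<^sub>R Dg x)" by (rule norm_triangle_ineq4)
    also have "norm (c^2 *\<^sub>R Dg x) = c^2 * norm (Dg x)" by simp
    also have "c^2 * norm (Dg x) \<le> B^4 * B" using c2B nDgx by (intro mult_mono) auto
    moreover have "B^4 * B = B^5" by (simp add: eval_nat_numeral)
    ultimately show ?thesis using nDh1x nz unfolding V_def by linarith
  qed
  have S1: "2 * a * c * f p + a * inner (p - x) v + d^2 / 2 \<le> 2 * a * c * f x"
  proof -
    have "2 * a * c * f p + norm (p - (x - a *\<^sub>R v))^2 / 2 \<le> 2 * a * c * f x + norm (x - (x - a *\<^sub>R v))^2 / 2"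
      using pr xC unfolding c_def v_def by blast
    moreover have "norm (p - (x - a *\<^sub>R v))^2 = d^2 + 2 * a * inner (p - x) v + a^2 * norm v ^2"
      using norm_sq_add_scaled[of "p - x" a v] unfolding d_def by (simp add: algebra_simps)
    moreover have "norm (x - (x - a *\<^sub>R v))^2 = a^2 * norm v ^2" using a by (simp add: power_mult_distrib)
    ultimately show ?thesis by (simp add: field_simps)
  qed
  have ip_le: "- inner (p - x) v \<le> d * V"
  proof -
    have "- inner (p - x) v \<le> norm (p - x) * norm v"
      using Cauchy_Schwarz_ineq2[of "p - x" v] by linarith
    also have "\<dots> \<le> d * V" unfolding d_def using nv by (intro mult_left_mono) auto
    finally show ?thesis .
  qed
  have d0: "d \<ge> 0" by (simp add: d_def)
  have ab: "a \<le> e^2 / (64 * B^3)" "a \<le> e / (16 * V)" "a \<le> 1 / (2 * (B + B^5 + 9 * B^7 + sig / 2))"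
    using a(2) unfolding abar_def V_def by auto
  have dsmall: "d < e / 2"
  proof (rule ccontr)
    assume "\<not> d < e / 2"
    then have de: "d \<ge> e / 2" by simp
    have cfp: "0 \<le> 2 * a * c * f p" using a c0 f_nonneg[of p] by simp
    have cfx: "2 * a * c * f x \<le> 2 * a * B^3"
    proof -
      have "c * f x \<le> B^2 * B" using cB fxB c0 f_nonneg[of x] by (intro mult_mono) auto
      moreover have "B^2 * B = B^3" by (simp add: eval_nat_numeral)
      ultimately show ?thesis using a by (simp add: algebra_simps)
    qed
    have "a * (- inner (p - x) v) \<le> a * (d * V)" using ip_le a by (intro mult_left_mono) auto
    then have "d^2 \<le> 4 * a * B^3 + 2 * (a * V) * d" using S1 cfp cfx by (simp add: algebra_simps)
    moreover have "4 * a * B^3 \<le> e^2 / 16"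
      using ab(1) Bpos by (simp add: field_simps)
    moreover have "2 * (a * V) * d \<le> (e / 8) * d"
    proof -
      have "2 * (a * V) \<le> e / 8" using ab(2) Vpos by (simp add: field_simps)
      then show ?thesis using d0 by (intro mult_right_mono) auto
    qed
    moreover have "(e / 2) * d \<le> d * d" using de d0 by (intro mult_right_mono) auto
    moreover have "(e / 2) * (e / 2) \<le> e * d / 2"
    proof -
      have "(e / 2) * (e / 2) \<le> (e / 2) * d" using de e by (intro mult_left_mono) auto
      then show ?thesis by simp
    qed
    ultimately have "e * e \<le> 0" by (simp add: power2_eq_square)
    moreover have "e * e > 0" using e(1) by simp
    ultimately show False by linarith
  qed
  have d1: "d \<le> 1" using dsmall e by simp
  have pball: "p \<in> ball x e" using dsmall e by (simp add: d_def dist_norm norm_minus_commute)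
  have cb: "cball x d \<subseteq> ball x e" using dsmall e by auto
  have Dgl: "\<forall>y\<in>cball x d. norm (Dg y - Dg x) \<le> B * d"
  proof
    fix y assume y: "y \<in> cball x d"
    then have "Rloc f g h1 h2 Dg Dh1 B y x" using R cb e by auto
    then have "norm (Dg y - Dg x) \<le> B * dist y x" unfolding Rloc_def by auto
    also have "\<dots> \<le> B * d" using y Bpos by (intro mult_left_mono) (auto simp: dist_commute)
    finally show "norm (Dg y - Dg x) \<le> B * d" .
  qed
  have Dh1l: "\<forall>y\<in>cball x d. norm (Dh1 y - Dh1 x) \<le> B * d"
  proof
    fix y assume y: "y \<in> cball x d"
    then have "Rloc f g h1 h2 Dg Dh1 B y x" using R cb e by auto
    then have "norm (Dh1 y - Dh1 x) \<le> B * dist y x" unfolding Rloc_def by auto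
    also have "\<dots> \<le> B * d" using y Bpos by (intro mult_left_mono) (auto simp: dist_commute)
    finally show "norm (Dh1 y - Dh1 x) \<le> B * d" .
  qed
  have pcb: "p \<in> cball x d" by (simp add: d_def dist_norm norm_minus_commute)
  have desc_h1: "\<bar>h1 p - h1 x - inner (Dh1 x) (p - x)\<bar> \<le> B * d * d"
    using descent_bound[OF h1_grad Dh1l pcb] by (simp add: d_def)
  have desc_g: "\<bar>g p - g x - inner (Dg x) (p - x)\<bar> \<le> B * d * d"
    using descent_bound[OF g_grad Dgl pcb] by (simp add: d_def)
  have Rp: "Rloc f g h1 h2 Dg Dh1 B p x" using R pball e by auto
  then have Bgp: "1 \<le> B * g p" and gpB: "\<bar>g p\<bar> \<le> B" and fpx: "\<bar>f p - f x\<bar> \<le> B * d"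
    unfolding Rloc_def by (auto simp: d_def dist_norm)
  have gp0: "g p > 0" using Bgp g_nonneg[of p] by (cases "g p = 0") auto
  have igp: "1 / g p \<le> B" using Bgp gp0 by (simp add: field_simps)
  have iDg: "\<bar>inner (Dg x) (p - x)\<bar> \<le> B * d"
  proof -
    have "\<bar>inner (Dg x) (p - x)\<bar> \<le> norm (Dg x) * norm (p - x)" by (rule Cauchy_Schwarz_ineq2)
    also have "\<dots> \<le> B * d" unfolding d_def using nDgx by (intro mult_right_mono) auto
    finally show ?thesis .
  qed
  have gdiff: "\<bar>g x - g p\<bar> \<le> 2 * B * d"
  proof -
    have "B * d * d \<le> B * d * 1" using d1 d0 Bpos by (intro mult_left_mono) auto
    then show ?thesis using desc_g iDg by linarith
  qed
  define N where "N = (f p - f x) * g x + f x * (g x - g p)"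
  have Nb: "\<bar>N\<bar> \<le> 3 * B^2 * d"
  proof -
    have "\<bar>(f p - f x) * g x\<bar> \<le> (B * d) * B" unfolding abs_mult using fpx gxB by (intro mult_mono) auto
    moreover have "\<bar>f x * (g x - g p)\<bar> \<le> B * (2 * B * d)" unfolding abs_mult using fxB gdiff
      by (intro mult_mono) auto
    ultimately show ?thesis unfolding N_def by (simp add: power2_eq_square algebra_simps)
  qed
  define cp where "cp = f p / g p"
  have cpc: "g p * (cp - c)^2 = N^2 * (1 / g p) * (1 / g x)^2"
  proof -
    have "cp - c = N / (g p * g x)" unfolding cp_def c_def N_def using gp0 gx0
      by (simp add: diff_divide_distrib add_divide_distrib algebra_simps)
    then have "g p * (cp - c)^2 = g p * (N^2 / ((g p)^2 * (g x)^2))" by (simp add: power_divide power_mult_distrib)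
    also have "\<dots> = N^2 * (1 / g p) * (1 / g x)^2" using gp0 by (simp add: power2_eq_square)
    finally show ?thesis .
  qed
  have Gb: "g p * (cp - c)^2 \<le> 9 * B^7 * d^2"
  proof -
    have "\<bar>N\<bar>^2 \<le> (3 * B^2 * d)^2" by (rule power_mono[OF Nb abs_ge_zero])
    then have N2: "N^2 \<le> (3 * B^2 * d)^2" by simp
    have a1: "N^2 * (1 / g p) \<le> (3 * B^2 * d)^2 * B"
      by (rule mult_mono[OF N2 igp]) (use gp0 in auto)
    have a2: "(1 / g x)^2 \<le> B^2" by (rule power_mono[OF igx]) (use gx0 in simp)
    have "N^2 * (1 / g p) * (1 / g x)^2 \<le> (3 * B^2 * d)^2 * B * B^2"
      by (rule mult_mono[OF a1 a2]) (use Bpos gp0 in auto)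
    also have "\<dots> = 9 * B^7 * d^2" by (simp add: eval_nat_numeral algebra_simps)
    finally show ?thesis using cpc by simp
  qed
  have ident: "2 * cp * f p - cp^2 * g p = 2 * c * f p - c^2 * g p + g p * (cp - c)^2"
  proof -
    have "cp * g p = f p" using gp0 by (simp add: cp_def)
    then show ?thesis by (simp add: power2_eq_square algebra_simps)
  qed
  have Frx: "Fr f g h1 h2 x = 2 * c * f x - c^2 * g x + h1 x - h2 x"
  proof -
    have cg: "c * g x = f x" using gx0 by (simp add: c_def)
    have "(f x)^2 / g x = c * f x" by (simp add: c_def power2_eq_square)
    moreover have "c^2 * g x = c * f x" by (metis cg mult.assoc power2_eq_square)
    ultimately show ?thesis unfolding Fr_def by simp
  qed
  define i1 where "i1 = inner (p - x) (Dh1 x)"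
  define i2 where "i2 = inner (p - x) (Dg x)"
  have ipv: "inner (p - x) v = i1 - c^2 * i2 - (inner p z - inner x z)"
    unfolding v_def i1_def i2_def by (simp add: inner_diff_right inner_diff_left)
  have star: "2 * c * f p + inner (p - x) v + d^2 / (2 * a) \<le> 2 * c * f x"
  proof -
    have "a * (2 * c * f p + inner (p - x) v + d^2 / (2 * a)) \<le> a * (2 * c * f x)"
      using S1 a by (simp add: algebra_simps)
    then show ?thesis using a by simp
  qed
  have h1b: "h1 p - i1 \<le> h1 x + B * d * d" using desc_h1 unfolding i1_def by (simp add: inner_commute)
  have gb: "g x - B * d * d \<le> g p - i2" using desc_g unfolding i2_def by (simp add: inner_commute)
  have gbc: "c^2 * g x - c^2 * (B * d * d) \<le> c^2 * g p - c^2 * i2"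
    using mult_left_mono[OF gb, of "c^2"] by (simp add: algebra_simps)
  have cBdd: "c^2 * (B * d * d) \<le> B^5 * (d * d)"
  proof -
    have "c^2 * B \<le> B^4 * B" using c2B Bpos by (intro mult_right_mono) auto
    then have "c^2 * B * (d * d) \<le> B^4 * B * (d * d)" by (rule mult_right_mono) (use d0 in simp)
    moreover have "B^4 * B = B^5" by (simp add: eval_nat_numeral)
    moreover have "c^2 * (B * d * d) = c^2 * B * (d * d)" by (simp add: mult.assoc)
    ultimately show ?thesis by simp
  qed
  define W where "W = B + B^5 + 9 * B^7 + sig / 2"
  have Wpos: "W > 0" using Bpos sig unfolding W_def by (simp add: add_pos_pos)
  have dW: "d^2 * W \<le> d^2 / (2 * a)"
  proof -
    have "2 * a * W \<le> 1" using ab(3) Wpos a unfolding W_def[symmetric] by (simp add: field_simps)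
    then have "W \<le> 1 / (2 * a)" using a by (simp add: field_simps)
    then have "d^2 * W \<le> d^2 * (1 / (2 * a))" by (intro mult_left_mono) auto
    then show ?thesis by simp
  qed
  have "2 * cp * f p + (h1 p - cp^2 * g p) + (inner x z - h2 x) - inner p z + sig / 2 * d^2
       \<le> Fr f g h1 h2 x"
    using ident Frx star ipv h1b gbc cBdd dW Gb
    unfolding W_def by (simp add: power2_eq_square algebra_simps)
  then show ?thesis using gp0 unfolding cp_def d_def by simp
qed

lemma acc_real:
  assumes xin: "x \<in> Omega g \<inter> C" and zs: "z \<in> subdiff (\<lambda>y. ereal (h2 y)) x"
  shows "(p \<in> Omega g \<and> Hfun f g h1 h2 C p z (f p / g p) + ereal (sig / 2 * norm (p - x)^2) \<le> Fobj f g h1 h2 C x)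
     \<longleftrightarrow> (p \<in> Omega g \<and> p \<in> C \<and> 2 * (f p / g p) * f p + (h1 p - (f p / g p)^2 * g p) + (inner x z - h2 x)
            - inner p z + sig / 2 * norm (p - x)^2 \<le> Fr f g h1 h2 x)"
proof -
  have cj: "conj h2 z = ereal (inner x z - h2 x)" by (rule conj_at_subgrad[OF zs])
  have Fx: "Fobj f g h1 h2 C x = ereal (Fr f g h1 h2 x)" by (rule Fobj_in[OF xin])
  show ?thesis
  proof (cases "p \<in> C")
    case True
    show ?thesis using Hfun_in[OF cj True, of f g h1 "f p / g p"] Fx True by simp
  next
    case False
    show ?thesis using Hfun_out[OF cj False, of f g h1 "f p / g p"] Fx False by simp
  qed
qed

lemma acc_descent:
  assumes gp: "g p \<noteq> 0" and zs: "\<forall>y. h2 x + inner z (y - x) \<le> h2 y"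
    and acc: "2 * (f p / g p) * f p + (h1 p - (f p / g p)^2 * g p) + (inner x z - h2 x)
            - inner p z + sig / 2 * norm (p - x)^2 \<le> Fr f g h1 h2 x"
  shows "Fr f g h1 h2 p + sig / 2 * norm (p - x)^2 \<le> Fr f g h1 h2 x"
proof -
  have e1: "2 * (f p / g p) * f p - (f p / g p)^2 * g p = (f p)^2 / g p"
    using gp by (simp add: field_simps power2_eq_square)
  have "h2 x + inner z (p - x) \<le> h2 p" using zs by blast
  then have "h2 x + inner p z - inner x z \<le> h2 p" by (simp add: inner_diff_right inner_commute)
  then show ?thesis using acc e1 unfolding Fr_def by linarith
qed

lemma step_ineq:
  fixes p x y v :: "'a::real_inner"
  assumes al: "0 < amin" "amin \<le> al"
    and pr: "2 * al * c * fp + norm (p - (x - al *\<^sub>R v))^2 / 2 \<le> 2 * al * c * fy + norm (y - (x - al *\<^sub>R v))^2 / 2"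
  shows "2 * c * fp + inner (p - y) v \<le> 2 * c * fy + (1 / (2 * amin)) * norm (y - x)^2"
proof -
  have e1: "norm (p - (x - al *\<^sub>R v))^2 = norm (p - x)^2 + 2 * al * inner (p - x) v + al^2 * norm v ^2"
    using norm_sq_add_scaled[of "p - x" al v] by (simp add: algebra_simps)
  have e2: "norm (y - (x - al *\<^sub>R v))^2 = norm (y - x)^2 + 2 * al * inner (y - x) v + al^2 * norm v ^2"
    using norm_sq_add_scaled[of "y - x" al v] by (simp add: algebra_simps)
  have ip: "inner (p - y) v = inner (p - x) v - inner (y - x) v" by (simp add: inner_diff_left)
  have "al * (2 * c * fp + inner (p - y) v) \<le> al * (2 * c * fy) + norm (y - x)^2 / 2"
    using pr e1 e2 ip zero_le_power2[of "norm (p - x)"] by (simp add: algebra_simps inner_diff_left; linarith)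
  then have "2 * c * fp + inner (p - y) v \<le> 2 * c * fy + norm (y - x)^2 / (2 * al)"
    using al by (simp add: field_simps)
  also have "norm (y - x)^2 / (2 * al) \<le> (1 / (2 * amin)) * norm (y - x)^2"
    using al mult_right_mono[OF al(2) zero_le_power2[of "norm (y - x)"]] by (simp add: field_simps)
  finally show ?thesis by simp
qed

lemma le_eps_zero:
  fixes D M :: real
  assumes M: "M \<ge> 0" and H: "\<And>t. 0 < t \<Longrightarrow> t \<le> 1 \<Longrightarrow> D \<le> t * M"
  shows "D \<le> 0"
proof (rule ccontr)
  assume "\<not> D \<le> 0"
  then have D: "D > 0" by simp
  define t where "t = min 1 (D / (2 * (M + 1)))"
  have t: "0 < t" "t \<le> 1" using D M by (auto simp: t_def)
  have "t * M \<le> (D / (2 * (M + 1))) * M" using M by (intro mult_right_mono) (auto simp: t_def)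
  also have "\<dots> < D"
  proof -
    have "0 \<le> D * M" using D M by simp
    then have "0 < D * M + D * 2" using D by linarith
    then show ?thesis using D M by (simp add: field_simps)
  qed
  finally show False using H[OF t] by simp
qed

lemma quad_to_subgrad:
  fixes f :: "'a::real_inner \<Rightarrow> real"
  assumes C: "convex C" and fc: "convex_on UNIV f" and xs: "xs \<in> C" and cs: "cs \<ge> 0" and Q: "Q \<ge> 0"
    and H: "\<forall>y\<in>C. 2 * cs * (f xs - f y) + inner (xs - y) v \<le> Q * norm (y - xs)^2"
  shows "\<forall>q\<in>C. 2 * cs * f xs + inner (- v) (q - xs) \<le> 2 * cs * f q"
proof
  fix q assume q: "q \<in> C"
  define D where "D = 2 * cs * (f xs - f q) + inner (xs - q) v"
  have "D \<le> 0"
  proof (rule le_eps_zero[of "Q * norm (q - xs)^2"])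
    show "0 \<le> Q * norm (q - xs)^2" using Q by simp
    fix t :: real assume t: "0 < t" "t \<le> 1"
    define y where "y = (1 - t) *\<^sub>R xs + t *\<^sub>R q"
    have yC: "y \<in> C" using C xs q t unfolding y_def by (intro convexD) auto
    have fy: "f y \<le> (1 - t) * f xs + t * f q" unfolding y_def using t by (intro convex_onD[OF fc]) auto
    have yx: "y - xs = t *\<^sub>R (q - xs)" by (simp add: y_def algebra_simps)
    have xy: "xs - y = t *\<^sub>R (xs - q)" by (simp add: y_def algebra_simps)
    have "t * (2 * cs * (f xs - f q)) \<le> 2 * cs * (f xs - f y)"
    proof -
      have "t * (f xs - f q) \<le> f xs - f y" using fy by (simp add: algebra_simps)
      then have "2 * cs * (t * (f xs - f q)) \<le> 2 * cs * (f xs - f y)" using cs by (intro mult_left_mono) auto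
      then show ?thesis by (simp add: algebra_simps)
    qed
    moreover have "inner (xs - y) v = t * inner (xs - q) v" by (simp add: xy)
    moreover have "norm (y - xs)^2 = t^2 * norm (q - xs)^2" by (simp add: yx power_mult_distrib)
    ultimately have "t * D \<le> Q * (t^2 * norm (q - xs)^2)" using H yC unfolding D_def
      by (smt (verit, ccfv_threshold) distrib_left)
    then have "t * D \<le> t * (t * (Q * norm (q - xs)^2))" by (simp add: power2_eq_square algebra_simps)
    then show "D \<le> t * (Q * norm (q - xs)^2)" using t by simp
  qed
  then show "2 * cs * f xs + inner (- v) (q - xs) \<le> 2 * cs * f q"
    unfolding D_def by (simp add: inner_diff_left inner_diff_right inner_commute algebra_simps)
qed

lemma subdiff_ind:
  assumes "xs \<in> C" and "\<forall>q\<in>C. \<phi> xs + inner u (q - xs) \<le> \<phi> q"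
  shows "u \<in> subdiff (\<lambda>y. ereal (\<phi> y) + ind C y) xs"
  using assms unfolding subdiff_def ind_def by auto

theorem theorem4p2:
  fixes f g h1 h2 :: "'a::euclidean_space \<Rightarrow> real"
    and Dg Dh1 :: "'a \<Rightarrow> 'a"
    and C :: "'a set"
    and alo ahi sig r :: real
    and x :: "nat \<Rightarrow> 'a"
  assumes f_nonneg: "\<And>y. f y \<ge> 0"
    and g_nonneg: "\<And>y. g y \<ge> 0"
    and C_closed: "closed C" and C_convex: "convex C"
    and C_Omega: "C \<inter> Omega g \<noteq> {}"
    and f_convex: "convex_on UNIV f"
    and g_grad: "\<And>y. (g has_derivative (\<lambda>v. inner (Dg y) v)) (at y)"
    and g_lip: "locally_lipschitz Dg"
    and h1_grad: "\<And>y. (h1 has_derivative (\<lambda>v. inner (Dh1 y) v)) (at y)"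
    and h1_lip: "locally_lipschitz Dh1"
    and h2_convex: "convex_on UNIV h2"
    and params: "0 < alo" "alo < ahi" "sig > 0" "0 < r" "r < 1"
    and gen: "generated_by_alg1 f g Dg h1 Dh1 h2 C alo ahi sig r x"
    and X0_compact: "compact {y \<in> domF f g h1 h2 C. Fobj f g h1 h2 C y \<le> Fobj f g h1 h2 C (x 0)}"
  shows "\<forall>xs. (\<exists>s. strict_mono s \<and> (x \<circ> s) \<longlonglongrightarrow> xs) \<longrightarrow>
           xs \<in> {y \<in> domF f g h1 h2 C. Fobj f g h1 h2 C y \<le> Fobj f g h1 h2 C (x 0)} \<and>
           critical_point f g Dg Dh1 h2 C xs"
proof -
  have x0d: "x 0 \<in> domF f g h1 h2 C" using gen unfolding generated_by_alg1_def by blast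
  obtain z a0 j xh where G: "\<forall>k. z k \<in> subdiff (\<lambda>y. ereal (h2 y)) (x k) \<and> alo \<le> a0 k \<and> a0 k \<le> ahi \<and>
     (\<forall>i \<le> j k. xh k i \<in> prox (\<lambda>y. ereal (2 * (r ^ i * a0 k) * (f (x k) / g (x k)) * f y) + ind C y)
        (x k - (r ^ i * a0 k) *\<^sub>R (Dh1 (x k) - (f (x k) / g (x k))^2 *\<^sub>R Dg (x k) - z k))) \<and>
     (\<forall>i \<le> j k. (xh k i \<in> Omega g \<and> Hfun f g h1 h2 C (xh k i) (z k) (f (xh k i) / g (xh k i))
        + ereal (sig / 2 * norm (xh k i - x k)^2) \<le> Fobj f g h1 h2 C (x k)) \<longleftrightarrow> i = j k) \<and>
     x (Suc k) = xh k (j k)"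
    using gen unfolding generated_by_alg1_def Let_def by (elim conjE exE) blast
  have zk: "\<And>k. z k \<in> subdiff (\<lambda>y. ereal (h2 y)) (x k)" using G by blast
  have a0k: "\<And>k. alo \<le> a0 k \<and> a0 k \<le> ahi" using G by blast
  have proxk: "\<And>k i. i \<le> j k \<Longrightarrow> xh k i \<in> prox (\<lambda>y. ereal (2 * (r ^ i * a0 k) * (f (x k) / g (x k)) * f y) + ind C y)
        (x k - (r ^ i * a0 k) *\<^sub>R (Dh1 (x k) - (f (x k) / g (x k))^2 *\<^sub>R Dg (x k) - z k))"
    using G by blast
  have acck: "\<And>k i. i \<le> j k \<Longrightarrow> ((xh k i \<in> Omega g \<and> Hfun f g h1 h2 C (xh k i) (z k) (f (xh k i) / g (xh k i))
        + ereal (sig / 2 * norm (xh k i - x k)^2) \<le> Fobj f g h1 h2 C (x k)) \<longleftrightarrow> i = j k)"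
    using G by blast
  have xnext: "\<And>k. x (Suc k) = xh k (j k)" using G by blast
  have x0in: "x 0 \<in> Omega g \<inter> C" using x0d by (simp add: domF_iff)
  define F0 where "F0 = Fr f g h1 h2 (x 0)"
  define K where "K = {y. y \<in> Omega g \<inter> C \<and> Fr f g h1 h2 y \<le> F0}"
  have Kchar: "{y \<in> domF f g h1 h2 C. Fobj f g h1 h2 C y \<le> Fobj f g h1 h2 C (x 0)} = K"
  proof (rule set_eqI)
    fix y
    show "y \<in> {y \<in> domF f g h1 h2 C. Fobj f g h1 h2 C y \<le> Fobj f g h1 h2 C (x 0)} \<longleftrightarrow> y \<in> K"
    proof (cases "y \<in> Omega g \<inter> C")
      case True
      then show ?thesis by (simp add: domF_iff Fobj_in[OF True] Fobj_in[OF x0in] K_def F0_def)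
    next
      case False
      then show ?thesis by (auto simp: domF_iff K_def)
    qed
  qed
  have Kc: "compact K" using X0_compact Kchar by simp
  have zs: "\<forall>y. h2 (x k) + inner (z k) (y - x k) \<le> h2 y" for k using zk[of k] by (simp add: subdiff_real)
  have desc: "x (Suc k) \<in> Omega g \<inter> C \<and> Fr f g h1 h2 (x (Suc k)) + sig / 2 * norm (x (Suc k) - x k)^2
       \<le> Fr f g h1 h2 (x k)" if xin: "x k \<in> Omega g \<inter> C" for k
  proof -
    have "xh k (j k) \<in> Omega g \<and> Hfun f g h1 h2 C (xh k (j k)) (z k) (f (xh k (j k)) / g (xh k (j k)))
        + ereal (sig / 2 * norm (xh k (j k) - x k)^2) \<le> Fobj f g h1 h2 C (x k)"
      using acck[of "j k" k] by simp
    then have A: "xh k (j k) \<in> Omega g \<and> xh k (j k) \<in> C \<and>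
        2 * (f (xh k (j k)) / g (xh k (j k))) * f (xh k (j k)) + (h1 (xh k (j k)) - (f (xh k (j k)) / g (xh k (j k)))^2 * g (xh k (j k)))
        + (inner (x k) (z k) - h2 (x k)) - inner (xh k (j k)) (z k) + sig / 2 * norm (xh k (j k) - x k)^2 \<le> Fr f g h1 h2 (x k)"
      using acc_real[OF xin zk[of k]] by blast
    then have gp: "g (xh k (j k)) \<noteq> 0" by (simp add: Omega_def)
    have D: "Fr f g h1 h2 (xh k (j k)) + sig / 2 * norm (xh k (j k) - x k)^2 \<le> Fr f g h1 h2 (x k)"
      by (rule acc_descent[where z="z k"]) (use gp zs[of k] A in auto)
    show ?thesis using A D by (simp add: xnext)
  qed
  have inv: "x k \<in> Omega g \<inter> C \<and> Fr f g h1 h2 (x k) \<le> F0" for k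
  proof (induction k)
    case 0 then show ?case using x0in by (simp add: F0_def)
  next
    case (Suc k)
    have i1: "x k \<in> Omega g \<inter> C" and i2: "Fr f g h1 h2 (x k) \<le> F0" using Suc.IH by auto
    have d1: "x (Suc k) \<in> Omega g \<inter> C" and d2: "Fr f g h1 h2 (x (Suc k)) + sig / 2 * norm (x (Suc k) - x k)^2
       \<le> Fr f g h1 h2 (x k)" using desc[OF i1] by auto
    have "0 \<le> sig / 2 * norm (x (Suc k) - x k)^2" using params(3) by simp
    then show ?case using d1 d2 i2 by simp
  qed
  have xK: "x k \<in> K" for k using inv[of k] by (simp add: K_def)
  have gposK: "g y > 0" if "y \<in> K" for y
    using that g_nonneg[of y] unfolding K_def Omega_def by force
  have "\<exists>e>0. \<exists>B. \<forall>y\<in>K. \<forall>u\<in>ball y e. \<forall>u'\<in>ball y e. Rloc f g h1 h2 Dg Dh1 B u u'"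
  proof (rule unif_local[OF Kc])
    fix y assume yK: "y \<in> K"
    show "\<exists>e>0. \<exists>B. \<forall>u\<in>ball y e. \<forall>u'\<in>ball y e. Rloc f g h1 h2 Dg Dh1 B u u'"
      by (rule Rloc_local[OF g_nonneg gposK[OF yK] f_convex g_grad g_lip h1_grad h1_lip h2_convex])
  next
    fix B B' :: real and u u' :: 'a assume "B \<le> B'" "Rloc f g h1 h2 Dg Dh1 B u u'"
    then show "Rloc f g h1 h2 Dg Dh1 B' u u'" by (rule Rloc_mono[OF g_nonneg])
  qed
  then obtain e0 B where e0: "e0 > 0" and RK0: "\<forall>y\<in>K. \<forall>u\<in>ball y e0. \<forall>u'\<in>ball y e0. Rloc f g h1 h2 Dg Dh1 B u u'"
    by blast
  define e where "e = min e0 1"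
  have e: "e > 0" "e \<le> 1" using e0 by (auto simp: e_def)
  have RK: "\<forall>u\<in>ball y e. \<forall>u'\<in>ball y e. Rloc f g h1 h2 Dg Dh1 B u u'" if "y \<in> K" for y
    using RK0 that by (auto simp: e_def)
  have Bpos: "B > 0"
  proof -
    have "Rloc f g h1 h2 Dg Dh1 B (x 0) (x 0)" using RK[OF xK[of 0]] e by auto
    then have "1 \<le> B * g (x 0)" unfolding Rloc_def by auto
    moreover have "g (x 0) \<ge> 0" by (rule g_nonneg)
    ultimately show ?thesis
    proof -
      assume h: "1 \<le> B * g (x 0)" "g (x 0) \<ge> 0"
      show ?thesis
      proof (rule ccontr)
        assume "\<not> B > 0"
        then have "B * g (x 0) \<le> 0" using h(2) by (simp add: mult_nonpos_nonneg)
        then show False using h(1) by simp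
      qed
    qed
  qed
  define amin where "amin = min alo (r * abar B e sig)"
  have aminpos: "amin > 0" using abar_pos[OF Bpos e(1) params(3)] params by (simp add: amin_def)
  have alpha_lb: "amin \<le> r ^ j k * a0 k" for k
  proof -
    have xkin: "x k \<in> Omega g \<inter> C" using inv[of k] by blast
    then have xC: "x k \<in> C" by blast
    have small: "i = j k" if i: "i \<le> j k" and ai: "r ^ i * a0 k \<le> abar B e sig" for i
    proof -
      define p where "p = xh k i"
      have P: "p \<in> C \<and> (\<forall>y\<in>C. 2 * (r ^ i * a0 k) * (f (x k) / g (x k)) * f p
          + norm (p - (x k - (r ^ i * a0 k) *\<^sub>R (Dh1 (x k) - (f (x k) / g (x k))^2 *\<^sub>R Dg (x k) - z k)))^2 / 2
          \<le> 2 * (r ^ i * a0 k) * (f (x k) / g (x k)) * f y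
          + norm (y - (x k - (r ^ i * a0 k) *\<^sub>R (Dh1 (x k) - (f (x k) / g (x k))^2 *\<^sub>R Dg (x k) - z k)))^2 / 2)"
        unfolding p_def by (rule prox_real[OF proxk[OF i] xC])
      have apos: "0 < r ^ i * a0 k" using params a0k[of k] by simp
      have T: "g p \<noteq> 0 \<and> 2 * (f p / g p) * f p + (h1 p - (f p / g p)^2 * g p) + (inner (x k) (z k) - h2 (x k))
           - inner p (z k) + sig / 2 * norm (p - x k)^2 \<le> Fr f g h1 h2 (x k)"
        using trial_accept[OF RK[OF xK[of k]] e params(3) f_nonneg g_nonneg g_grad h1_grad zs[of k] apos ai _ xC] P
        by blast
      then have "p \<in> Omega g \<and> Hfun f g h1 h2 C p (z k) (f p / g p)
        + ereal (sig / 2 * norm (p - x k)^2) \<le> Fobj f g h1 h2 C (x k)"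
        using acc_real[OF xkin zk[of k], of p f h1 sig] P by (simp add: Omega_def)
      then show ?thesis using acck[OF i] unfolding p_def by blast
    qed
    show ?thesis
    proof (cases "j k = 0")
      case True
      have "amin \<le> alo" by (simp add: amin_def)
      then show ?thesis using a0k[of k] True by simp
    next
      case False
      define i where "i = j k - 1"
      have i: "i \<le> j k" "i \<noteq> j k" using False by (auto simp: i_def)
      then have "\<not> r ^ i * a0 k \<le> abar B e sig" using small by blast
      then have "r * abar B e sig \<le> r * (r ^ i * a0 k)" using params by (intro mult_left_mono) auto
      also have "r * (r ^ i * a0 k) = r ^ j k * a0 k" using False by (simp add: i_def power_Suc[symmetric])
      finally show ?thesis by (simp add: amin_def)
    qed
  qed
  have Frlb: "Fr f g h1 h2 y \<ge> - 2 * B" if "y \<in> K" for y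
  proof -
    have "Rloc f g h1 h2 Dg Dh1 B y y" using RK[OF that] e by auto
    then have "\<bar>h1 y\<bar> \<le> B" "\<bar>h2 y\<bar> \<le> B" unfolding Rloc_def by auto
    moreover have "(f y)^2 / g y \<ge> 0" using g_nonneg[of y] by simp
    ultimately show ?thesis unfolding Fr_def by linarith
  qed
  have tel: "sig / 2 * (\<Sum>k<n. norm (x (Suc k) - x k)^2) \<le> F0 - Fr f g h1 h2 (x n)" for n
  proof (induction n)
    case 0 then show ?case by (simp add: F0_def)
  next
    case (Suc n)
    then show ?case using desc[of n] inv[of n] by (simp add: algebra_simps)
  qed
  have summ: "summable (\<lambda>k. norm (x (Suc k) - x k)^2)"
  proof (rule summableI_nonneg_bounded)
    fix n
    have "sig / 2 * (\<Sum>k<n. norm (x (Suc k) - x k)^2) \<le> F0 + 2 * B" using tel[of n] Frlb[OF xK[of n]] by linarith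
    then show "(\<Sum>k<n. norm (x (Suc k) - x k)^2) \<le> (F0 + 2 * B) / (sig / 2)"
      using params(3) by (simp add: field_simps)
  qed simp
  have dlim: "(\<lambda>k. x (Suc k) - x k) \<longlonglongrightarrow> 0"
  proof -
    have "(\<lambda>k. norm (x (Suc k) - x k)^2) \<longlonglongrightarrow> 0" by (rule summable_LIMSEQ_zero[OF summ])
    then have "(\<lambda>k. sqrt (norm (x (Suc k) - x k)^2)) \<longlonglongrightarrow> sqrt 0" by (rule tendsto_real_sqrt)
    then have "(\<lambda>k. norm (x (Suc k) - x k)) \<longlonglongrightarrow> 0" by simp
    then show ?thesis by (simp add: tendsto_norm_zero_iff)
  qed
  have zbd: "norm (z k) \<le> 4 * B / e" for k
  proof (rule z_bound[OF zs[of k] e(1)])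
    show "\<forall>y\<in>ball (x k) e. \<bar>h2 y\<bar> \<le> B" using RK[OF xK[of k]] e unfolding Rloc_def by auto
  qed
  have cf: "isCont f y" for y using convex_on_continuous[OF open_UNIV f_convex]
    by (simp add: continuous_on_eq_continuous_at)
  have ch2: "isCont h2 y" for y using convex_on_continuous[OF open_UNIV h2_convex]
    by (simp add: continuous_on_eq_continuous_at)
  have cg: "isCont g y" for y using has_derivative_continuous[OF g_grad] by simp
  have cDg: "isCont Dg y" for y by (rule loclip_isCont[OF g_lip])
  have cDh1: "isCont Dh1 y" for y by (rule loclip_isCont[OF h1_lip])
  show ?thesis
  proof (intro allI impI)
    fix xs assume "\<exists>s. strict_mono s \<and> (x \<circ> s) \<longlonglongrightarrow> xs"
    then obtain s where s: "strict_mono s" "(x \<circ> s) \<longlonglongrightarrow> xs" by blast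
    have xsK: "xs \<in> K"
      by (rule closed_sequentially[OF compact_imp_closed[OF Kc] _ s(2)]) (simp add: xK)
    then have xsin: "xs \<in> Omega g \<inter> C" by (simp add: K_def)
    have gxs: "g xs \<noteq> 0" using xsin by (simp add: Omega_def)
    have "bounded (range (\<lambda>n. z (s n)))" by (rule boundedI[of _ "4 * B / e"]) (auto simp: zbd)
    then obtain w q where q: "strict_mono q" "((\<lambda>n. z (s n)) \<circ> q) \<longlonglongrightarrow> w"
      using bounded_imp_convergent_subsequence by blast
    define t where "t = s \<circ> q"
    have tm: "strict_mono t" unfolding t_def by (rule strict_mono_o[OF s(1) q(1)])
    have xt: "(\<lambda>n. x (t n)) \<longlonglongrightarrow> xs"
      using LIMSEQ_subseq_LIMSEQ[OF s(2) q(1)] by (simp add: t_def comp_def)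
    have zt: "(\<lambda>n. z (t n)) \<longlonglongrightarrow> w" using q(2) by (simp add: t_def comp_def)
    have xt1: "(\<lambda>n. x (Suc (t n))) \<longlonglongrightarrow> xs"
    proof -
      have "(\<lambda>n. x (Suc (t n)) - x (t n)) \<longlonglongrightarrow> 0"
        using LIMSEQ_subseq_LIMSEQ[OF dlim tm] by (simp add: comp_def)
      from tendsto_add[OF this xt] show ?thesis by simp
    qed
    have wsub: "\<forall>y. h2 xs + inner w (y - xs) \<le> h2 y"
    proof
      fix y
      have "(\<lambda>n. h2 (x (t n)) + inner (z (t n)) (y - x (t n))) \<longlonglongrightarrow> h2 xs + inner w (y - xs)"
        by (intro tendsto_add isCont_tendsto_compose[OF ch2 xt] tendsto_inner zt tendsto_diff tendsto_const xt)
      moreover have "\<forall>n. h2 (x (t n)) + inner (z (t n)) (y - x (t n)) \<le> h2 y" using zs by blast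
      ultimately show "h2 xs + inner w (y - xs) \<le> h2 y" by (intro LIMSEQ_le_const2) auto
    qed
    define cs where "cs = f xs / g xs"
    define vs where "vs = Dh1 xs - cs^2 *\<^sub>R Dg xs - w"
    define Q where "Q = 1 / (2 * amin)"
    have ct: "(\<lambda>n. f (x (t n)) / g (x (t n))) \<longlonglongrightarrow> cs"
      unfolding cs_def by (intro tendsto_divide isCont_tendsto_compose[OF cf xt] isCont_tendsto_compose[OF cg xt] gxs)
    have key: "\<forall>y\<in>C. 2 * cs * (f xs - f y) + inner (xs - y) vs \<le> Q * norm (y - xs)^2"
    proof
      fix y assume yC: "y \<in> C"
      have ineq: "2 * (f (x (t n)) / g (x (t n))) * f (x (Suc (t n)))
            + inner (x (Suc (t n)) - y) (Dh1 (x (t n)) - (f (x (t n)) / g (x (t n)))^2 *\<^sub>R Dg (x (t n)) - z (t n))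
          \<le> 2 * (f (x (t n)) / g (x (t n))) * f y + Q * norm (y - x (t n))^2" for n
      proof -
        let ?k = "t n"
        have xC: "x ?k \<in> C" using inv[of ?k] by blast
        have P: "\<forall>y\<in>C. 2 * (r ^ j ?k * a0 ?k) * (f (x ?k) / g (x ?k)) * f (xh ?k (j ?k))
          + norm (xh ?k (j ?k) - (x ?k - (r ^ j ?k * a0 ?k) *\<^sub>R (Dh1 (x ?k) - (f (x ?k) / g (x ?k))^2 *\<^sub>R Dg (x ?k) - z ?k)))^2 / 2
          \<le> 2 * (r ^ j ?k * a0 ?k) * (f (x ?k) / g (x ?k)) * f y
          + norm (y - (x ?k - (r ^ j ?k * a0 ?k) *\<^sub>R (Dh1 (x ?k) - (f (x ?k) / g (x ?k))^2 *\<^sub>R Dg (x ?k) - z ?k)))^2 / 2"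
          using prox_real[OF proxk[of "j ?k" ?k] xC] by blast
        show ?thesis
          using step_ineq[OF aminpos alpha_lb[of ?k] P[rule_format, OF yC]] unfolding Q_def xnext by simp
      qed
      have L: "(\<lambda>n. 2 * (f (x (t n)) / g (x (t n))) * f (x (Suc (t n)))
            + inner (x (Suc (t n)) - y) (Dh1 (x (t n)) - (f (x (t n)) / g (x (t n)))^2 *\<^sub>R Dg (x (t n)) - z (t n)))
          \<longlonglongrightarrow> 2 * cs * f xs + inner (xs - y) vs"
        unfolding vs_def
        by (intro tendsto_add tendsto_mult tendsto_const ct isCont_tendsto_compose[OF cf xt1] tendsto_inner
            tendsto_diff xt1 tendsto_scaleR tendsto_power isCont_tendsto_compose[OF cDh1 xt]
            isCont_tendsto_compose[OF cDg xt] zt)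
      have Rt: "(\<lambda>n. 2 * (f (x (t n)) / g (x (t n))) * f y + Q * norm (y - x (t n))^2)
          \<longlonglongrightarrow> 2 * cs * f y + Q * norm (y - xs)^2"
        by (intro tendsto_add tendsto_mult tendsto_const ct tendsto_power tendsto_norm tendsto_diff xt)
      have "2 * cs * f xs + inner (xs - y) vs \<le> 2 * cs * f y + Q * norm (y - xs)^2"
        by (rule LIMSEQ_le[OF L Rt]) (use ineq in blast)
      then show "2 * cs * (f xs - f y) + inner (xs - y) vs \<le> Q * norm (y - xs)^2"
        by (simp add: algebra_simps)
    qed
    have cs0: "cs \<ge> 0" unfolding cs_def using f_nonneg[of xs] g_nonneg[of xs] by simp
    have Q0: "Q \<ge> 0" unfolding Q_def using aminpos by simp
    have sg: "\<forall>q\<in>C. 2 * cs * f xs + inner (- vs) (q - xs) \<le> 2 * cs * f q"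
      by (rule quad_to_subgrad[OF C_convex f_convex _ cs0 Q0 key]) (use xsin in blast)
    have u: "- vs \<in> subdiff (\<lambda>y. ereal (2 * cs * f y) + ind C y) xs"
      by (rule subdiff_ind[of xs C "\<lambda>y. 2 * cs * f y"]) (use xsin sg in auto)
    have wd: "w \<in> subdiff (\<lambda>y. ereal (h2 y)) xs" using wsub by (simp add: subdiff_real)
    have crit: "critical_point f g Dg Dh1 h2 C xs"
      unfolding critical_point_def Let_def cs_def[symmetric]
    proof (intro conjI bexI)
      show "xs \<in> Omega g \<inter> C" by (rule xsin)
      show "- vs - cs^2 *\<^sub>R Dg xs + Dh1 xs - w = 0" by (simp add: vs_def algebra_simps)
    qed (use u wd in auto)
    show "xs \<in> {y \<in> domF f g h1 h2 C. Fobj f g h1 h2 C y \<le> Fobj f g h1 h2 C (x 0)} \<and>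
           critical_point f g Dg Dh1 h2 C xs"
      using xsK crit Kchar by simp
  qed
qed

end
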